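(* Consider the thresholding bandit setting and algorithm LSA with parameter $\alpha$ in the context, with $0<\alpha\le 8$ and $T\ge\max\{40/\alpha+1,40\}K$. Let $f(x)=\alpha x+\ln\alpha+0.5-\alpha$. For every arm $i\in B$ and every $\varkappa\ge\frac{\alpha-\ln\alpha-0.5}{\alpha}$, on the event $\mathcal{M}_{i,\varkappa}\cap\mathcal{F}_{\Lambda-f(\varkappa)}$ we have $T_i(T)\ge\lambda_i/20$.
   Context: $K\ge2$ arms; arm $i$ has reward distribution $\mathcal{D}_i$ on $[0,1]$ with mean $\theta_i$; $\theta\in(0,1)$; $\Delta_i=|\theta_i-\theta|$ (convention $\ln(1/0)=+\infty$). For each $i$, rewards $X_{i,1},X_{i,2},\dots$ from successive pulls of arm $i$ are i.i.d. from $\mathcal{D}_i$, independent across arms; $\hat\Delta_{i,t}=|\frac1t\sum_{s\le t}X_{i,s}-\theta|$. $T_i(t)$ = number of pulls of arm $i$ in the first $t$ rounds; $\hat\Delta_i(t)=\hat\Delta_{i,T_i(t)}$. LSA (parameter $\alpha>0$, budget $T$): pull each arm once in rounds $1..K$; in round $t=K+1,\dots,T$ pull an arm minimizing $\alpha T_i(t-1)(\hat\Delta_i(t-1))^2+0.5\ln T_i(t-1)$. $\xi_i(t)=\alpha T_i(t)(\hat\Delta_i(t))^2+0.5\ln T_i(t)$ for $t\ge K$; $\mathcal{F}_C=\{\exists T',K\le T'\le T:\xi_i(T')>C\ \forall i\}$. $M=\max\{40/\alpha+1,40\}$; $g_i(x)=e^{2x}$ if $x\le\ln\Delta_i^{-1}$,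 $g_i(x)=\frac{x-\ln\Delta_i^{-1}+\alpha}{\alpha\Delta_i^2}$ otherwise; $\Lambda$ is the unique $x\ge0$ with $\sum_ig_i(x)=T/M$; $\lambda_i=g_i(\Lambda)$; $B=\{i:\ln\Delta_i^{-1}<\Lambda\}$. $\mathcal{M}_{i,\varkappa}$ is the event that for all integers $1\le t\le\lambda_i$, $|\hat\Delta_{i,t}-\Delta_i|\le\sqrt{(\lambda_i\Delta_i^2/5-\varkappa/2+\frac1{4\alpha}\ln\frac{\lambda_i}{t})/t}$. *)

theory Defs
  imports Complex_Main
begin

(* Arms are 0..<K.  Rounds are 1..T.  I t is the arm pulled in round t.
   X i s is the reward of the s-th pull (s >= 1) of arm i. *)

definition pulls :: "(nat \<Rightarrow> nat) \<Rightarrow> nat \<Rightarrow> nat \<Rightarrow> nat" where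
  "pulls I i t = card {s \<in> {1..t}. I s = i}"

definition emp_gap :: "(nat \<Rightarrow> nat \<Rightarrow> real) \<Rightarrow> real \<Rightarrow> nat \<Rightarrow> nat \<Rightarrow> real" where
  "emp_gap X \<theta> i t = \<bar>(\<Sum>s=1..t. X i s) / real t - \<theta>\<bar>"

definition lsa_index :: "real \<Rightarrow> (nat \<Rightarrow> nat \<Rightarrow> real) \<Rightarrow> real \<Rightarrow> (nat \<Rightarrow> nat) \<Rightarrow> nat \<Rightarrow> nat \<Rightarrow> real" where
  "lsa_index \<alpha> X \<theta> I i t =
     \<alpha> * real (pulls I i t) * (emp_gap X \<theta> i (pulls I i t))\<^sup>2 + 0.5 * ln (real (pulls I i t))"

definition is_LSA_run :: "nat \<Rightarrow> real \<Rightarrow> nat \<Rightarrow> (nat \<Rightarrow> nat \<Rightarrow> real) \<Rightarrow> real \<Rightarrow> (nat \<Rightarrow> nat) \<Rightarrow> bool" where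
  "is_LSA_run K \<alpha> T X \<theta> I \<longleftrightarrow>
     bij_betw I {1..K} {..<K} \<and>
     (\<forall>t \<in> {K+1..T}. I t < K \<and>
        (\<forall>j<K. lsa_index \<alpha> X \<theta> I (I t) (t - 1) \<le> lsa_index \<alpha> X \<theta> I j (t - 1)))"

definition event_F :: "nat \<Rightarrow> real \<Rightarrow> nat \<Rightarrow> (nat \<Rightarrow> nat \<Rightarrow> real) \<Rightarrow> real \<Rightarrow> (nat \<Rightarrow> nat) \<Rightarrow> real \<Rightarrow> bool" where
  "event_F K \<alpha> T X \<theta> I C \<longleftrightarrow>
     (\<exists>T'. K \<le> T' \<and> T' \<le> T \<and> (\<forall>i<K. lsa_index \<alpha> X \<theta> I i T' > C))"

(* g_i, with the convention ln(1/0) = +infinity *)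
definition g_fun :: "real \<Rightarrow> real \<Rightarrow> real \<Rightarrow> real" where
  "g_fun \<alpha> \<Delta> x =
     (if \<Delta> = 0 \<or> x \<le> ln (1 / \<Delta>) then exp (2 * x)
      else (x - ln (1 / \<Delta>) + \<alpha>) / (\<alpha> * \<Delta>\<^sup>2))"

definition Mconst :: "real \<Rightarrow> real" where
  "Mconst \<alpha> = max (40 / \<alpha> + 1) 40"

definition Lambda :: "nat \<Rightarrow> real \<Rightarrow> nat \<Rightarrow> (nat \<Rightarrow> real) \<Rightarrow> real" where
  "Lambda K \<alpha> T \<Delta> = (THE x. x \<ge> 0 \<and> (\<Sum>i<K. g_fun \<alpha> (\<Delta> i) x) = real T / Mconst \<alpha>)"

definition lam :: "nat \<Rightarrow> real \<Rightarrow> nat \<Rightarrow> (nat \<Rightarrow> real) \<Rightarrow> nat \<Rightarrow> real" where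
  "lam K \<alpha> T \<Delta> i = g_fun \<alpha> (\<Delta> i) (Lambda K \<alpha> T \<Delta>)"

definition setB :: "nat \<Rightarrow> real \<Rightarrow> nat \<Rightarrow> (nat \<Rightarrow> real) \<Rightarrow> nat set" where
  "setB K \<alpha> T \<Delta> = {i. i < K \<and> \<Delta> i \<noteq> 0 \<and> ln (1 / \<Delta> i) < Lambda K \<alpha> T \<Delta>}"

(* event M_{i,kappa}; \<Delta>i = \<Delta>_i, li = \<lambda>_i *)
definition event_M :: "real \<Rightarrow> (nat \<Rightarrow> nat \<Rightarrow> real) \<Rightarrow> real \<Rightarrow> real \<Rightarrow> real \<Rightarrow> real \<Rightarrow> nat \<Rightarrow> bool" where
  "event_M \<alpha> X \<theta> \<Delta>i li \<kappa> i \<longleftrightarrow>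
     (\<forall>t::nat. 1 \<le> t \<and> real t \<le> li \<longrightarrow>
        \<bar>emp_gap X \<theta> i t - \<Delta>i\<bar>
          \<le> sqrt ((li * \<Delta>i\<^sup>2 / 5 - \<kappa> / 2 + 1 / (4 * \<alpha>) * ln (li / real t)) / real t))"

end

theory Submission
  imports Defs
begin

lemma ln_ge_one_minus_inv: "0 < (x::real) \<Longrightarrow> 1 - 1/x \<le> ln x"
proof -
  assume x: "0 < x"
  have "ln (1/x) \<le> 1/x - 1" using x by (intro ln_le_minus_one) simp
  moreover have "ln (1/x) = - ln x" using x by (simp add: ln_div)
  ultimately show ?thesis by simp
qed

lemma ln20: "29/10 \<le> ln (20::real)"
proof -
  have "1 - 1/(21/20) \<le> ln (21/20::real)" by (rule ln_ge_one_minus_inv) simp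
  hence "61 * (1/21) \<le> 61 * ln (21/20::real)" by simp
  also have "\<dots> = ln ((21/20::real)^61)" by (simp add: ln_realpow)
  also have "\<dots> \<le> ln 20" by (subst ln_le_cancel_iff) (simp_all add: power_divide)
  finally show ?thesis by simp
qed

lemma ln_u_bound: "0 < (u::real) \<Longrightarrow> ln u \<le> 9/20 * u - 9/50"
proof -
  assume u: "0 < u"
  define c :: real where "c = 20/9"
  have "ln (c / (21/20)^16) \<le> c / (21/20)^16 - 1" by (rule ln_le_minus_one) (simp add: c_def)
  moreover have "ln (c / (21/20)^16) = ln c - 16 * ln (21/20)" by (subst ln_divide_pos) (simp_all add: c_def ln_realpow)
  moreover have "ln (21/20::real) \<le> 21/20 - 1" by (rule ln_le_minus_one) simp
  moreover have "c / (21/20)^16 \<le> 10181/10000" by (simp add: c_def power_divide)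
  ultimately have lc: "ln c \<le> 41/50" by linarith
  have "ln (u / c) \<le> u / c - 1" using u by (intro ln_le_minus_one) (simp add: c_def)
  moreover have "ln (u/c) = ln u - ln c" using u by (subst ln_divide_pos) (simp_all add: c_def)
  ultimately show ?thesis using lc by (simp add: c_def)
qed
lemma core:
  fixes \<alpha> \<Delta> \<Lambda> \<kappa> lam D n :: real
  assumes a: "0 < \<alpha>" and d: "0 < \<Delta>"
    and LB: "ln (1/\<Delta>) < \<Lambda>"
    and lam: "lam = (\<Lambda> - ln (1/\<Delta>) + \<alpha>) / (\<alpha> * \<Delta>\<^sup>2)"
    and n1: "1 \<le> n" and nl: "n < lam / 20"
    and hk: "\<kappa> / 2 \<le> lam * \<Delta>\<^sup>2 / 5 + 1 / (80 * \<alpha>)"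
    and D0: "0 \<le> D"
    and hD: "\<bar>D - \<Delta>\<bar> \<le> sqrt ((lam * \<Delta>\<^sup>2 / 5 - \<kappa> / 2 + 1 / (4 * \<alpha>) * ln (lam / n)) / n)"
  shows "\<alpha> * n * D\<^sup>2 + 0.5 * ln n \<le> \<Lambda> - (\<alpha> * \<kappa> + ln \<alpha> + 0.5 - \<alpha>)"
proof -
  define L where "L = ln (1/\<Delta>)"
  define u where "u = \<alpha> * lam * \<Delta>\<^sup>2"
  define E where "E = lam * \<Delta>\<^sup>2 / 5 - \<kappa> / 2 + 1 / (4 * \<alpha>) * ln (lam / n)"
  define s where "s = sqrt (E / n)"
  have d2: "0 < \<Delta>\<^sup>2" using d by simp
  have u_eq: "u = \<Lambda> - L + \<alpha>" using lam a d2 by (simp add: u_def L_def field_simps)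
  have u_gt: "\<alpha> < u" using u_eq LB L_def by simp
  have upos: "0 < u" using u_gt a by simp
  have lampos: "0 < lam" using n1 nl by simp
  have s0: "0 \<le> s" using hD unfolding s_def E_def by linarith
  hence En: "0 \<le> E / n" unfolding s_def by simp
  hence E0: "0 \<le> E" using n1 by (simp add: zero_le_divide_iff)
  have ss: "n * s\<^sup>2 = E" using En n1 by (simp add: s_def)
  have Dle: "D \<le> \<Delta> + s" using hD unfolding s_def E_def by linarith
  have "D\<^sup>2 \<le> (\<Delta> + s)\<^sup>2" using Dle D0 by (intro power_mono) auto
  hence "n * D\<^sup>2 \<le> n * (\<Delta> + s)\<^sup>2" using n1 by (intro mult_left_mono) auto
  also have "\<dots> = n * \<Delta>\<^sup>2 + n * (2 * \<Delta> * s) + n * s\<^sup>2" by (simp add: power2_eq_square algebra_simps)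
  also have "\<dots> \<le> n * \<Delta>\<^sup>2 + n * (2 * \<Delta>\<^sup>2 + s\<^sup>2 / 2) + n * s\<^sup>2"
  proof -
    have "0 \<le> 2 * (\<Delta> - s/2)\<^sup>2" by simp
    hence "2 * \<Delta> * s \<le> 2 * \<Delta>\<^sup>2 + s\<^sup>2 / 2" by (simp add: power2_eq_square algebra_simps)
    thus ?thesis using n1 by (simp add: mult_left_mono)
  qed
  also have "\<dots> = 3 * (n * \<Delta>\<^sup>2) + 3/2 * E" using ss by (simp add: algebra_simps)
  finally have nD: "n * D\<^sup>2 \<le> 3 * (n * \<Delta>\<^sup>2) + 3/2 * E" .
  hence "\<alpha> * (n * D\<^sup>2) \<le> \<alpha> * (3 * (n * \<Delta>\<^sup>2) + 3/2 * E)" using a by (intro mult_left_mono) auto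
  hence b1: "\<alpha> * n * D\<^sup>2 \<le> 3 * (\<alpha> * n * \<Delta>\<^sup>2) + 3/2 * (\<alpha> * E)" by (simp add: algebra_simps)
  have "n * (\<alpha> * \<Delta>\<^sup>2) < lam / 20 * (\<alpha> * \<Delta>\<^sup>2)" using nl a d2 by (intro mult_strict_right_mono) auto
  hence b2: "\<alpha> * n * \<Delta>\<^sup>2 < u / 20" by (simp add: u_def algebra_simps)
  define l where "l = ln (lam / n)"
  have aE: "\<alpha> * E = u / 5 - \<alpha> * \<kappa> / 2 + l / 4" using a by (simp add: E_def u_def l_def field_simps)
  have "\<alpha> * (\<kappa> / 2) \<le> \<alpha> * (lam * \<Delta>\<^sup>2 / 5 + 1 / (80 * \<alpha>))" using hk a by (intro mult_left_mono) auto
  moreover have "\<alpha> * (lam * \<Delta>\<^sup>2 / 5 + 1 / (80 * \<alpha>)) = u / 5 + 1/80" using a by (simp add: u_def field_simps)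
  ultimately have b3: "\<alpha> * \<kappa> \<le> 2 * u / 5 + 1/40" by simp
  have "20 < lam / n" using nl n1 by (simp add: field_simps)
  hence "ln 20 < l" unfolding l_def by (subst ln_less_cancel_iff) auto
  hence b4: "29/10 < l" using ln20 by linarith
  have b5: "l = ln lam - ln n" using lampos n1 by (simp add: l_def ln_divide_pos)
  have "lam = u / (\<alpha> * \<Delta>\<^sup>2)" using a d2 by (simp add: u_def field_simps)
  hence "ln lam = ln u - ln (\<alpha> * \<Delta>\<^sup>2)" using upos a d2 by (simp add: ln_divide_pos)
  also have "ln (\<alpha> * \<Delta>\<^sup>2) = ln \<alpha> + 2 * ln \<Delta>" using a d by (simp add: ln_mult_pos ln_realpow)
  finally have b6: "ln lam = ln u - ln \<alpha> - 2 * ln \<Delta>" by simp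
  have b7: "L = - ln \<Delta>" using d by (simp add: L_def ln_div)
  have b8: "ln \<alpha> \<le> ln u" using a u_gt by simp
  have b9: "ln u \<le> 9/20 * u - 9/50" using upos by (rule ln_u_bound)
  show ?thesis using b1 b2 b3 b4 b5 b6 b7 b8 b9 aE u_eq by linarith
qed

theorem lemma10:
  fixes K T :: nat and \<alpha> \<theta> \<kappa> :: real
    and \<theta>s :: "nat \<Rightarrow> real" and X :: "nat \<Rightarrow> nat \<Rightarrow> real" and I :: "nat \<Rightarrow> nat" and i :: nat
  defines "\<Delta> \<equiv> (\<lambda>j. \<bar>\<theta>s j - \<theta>\<bar>)"
  defines "f \<equiv> (\<lambda>x::real. \<alpha> * x + ln \<alpha> + 0.5 - \<alpha>)"
  assumes K: "K \<ge> 2"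
    and alpha: "0 < \<alpha>" "\<alpha> \<le> 8"
    and T: "real T \<ge> Mconst \<alpha> * real K"
    and theta: "0 < \<theta>" "\<theta> < 1"
    and means: "\<forall>j<K. 0 \<le> \<theta>s j \<and> \<theta>s j \<le> 1"
    and rewards: "\<forall>j<K. \<forall>s\<ge>1. 0 \<le> X j s \<and> X j s \<le> 1"
    and run: "is_LSA_run K \<alpha> T X \<theta> I"
    and iB: "i \<in> setB K \<alpha> T \<Delta>"
    and kappa: "\<kappa> \<ge> (\<alpha> - ln \<alpha> - 0.5) / \<alpha>"
    and evM: "event_M \<alpha> X \<theta> (\<Delta> i) (lam K \<alpha> T \<Delta> i) \<kappa> i"
    and evF: "event_F K \<alpha> T X \<theta> I (Lambda K \<alpha> T \<Delta> - f \<kappa>)"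
  shows "real (pulls I i T) \<ge> lam K \<alpha> T \<Delta> i / 20"
proof (rule ccontr)
  assume contra: "\<not> lam K \<alpha> T \<Delta> i / 20 \<le> real (pulls I i T)"
  define \<Lambda> where "\<Lambda> = Lambda K \<alpha> T \<Delta>"
  define lm where "lm = lam K \<alpha> T \<Delta> i"
  define d where "d = \<Delta> i"
  have iK: "i < K" and dne: "d \<noteq> 0" and LB: "ln (1 / d) < \<Lambda>"
    using iB by (auto simp: setB_def d_def \<Lambda>_def)
  have d0: "0 < d" using dne by (simp add: d_def \<Delta>_def)
  have lm_eq: "lm = (\<Lambda> - ln (1/d) + \<alpha>) / (\<alpha> * d\<^sup>2)"
    using dne LB by (simp add: lm_def lam_def g_fun_def d_def \<Lambda>_def)
  obtain T' where T': "K \<le> T'" "T' \<le> T"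
    and xi: "\<forall>j<K. lsa_index \<alpha> X \<theta> I j T' > \<Lambda> - f \<kappa>"
    using evF by (auto simp: event_F_def \<Lambda>_def)
  define n where "n = pulls I i T'"
  have "i \<in> I ` {1..K}" using run iK by (auto simp: is_LSA_run_def bij_betw_def)
  then obtain s where s: "s \<in> {1..K}" "I s = i" by auto
  have "s \<in> {s \<in> {1..T'}. I s = i}" using s T' by auto
  hence "{s \<in> {1..T'}. I s = i} \<noteq> {}" by blast
  hence n1: "1 \<le> n" unfolding n_def pulls_def
    by (simp add: Suc_le_eq card_gt_0_iff)
  have "n \<le> pulls I i T" unfolding n_def pulls_def
    using T' by (intro card_mono) auto
  hence nl: "real n < lm / 20" using contra by (simp add: lm_def)
  have lm20: "20 < lm" using nl n1 by simp
  define m where "m = nat \<lfloor>lm\<rfloor>"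
  have m1: "real m \<le> lm" "lm < real m + 1" using lm20 by (simp_all add: m_def)
  have "(20::int) \<le> \<lfloor>lm\<rfloor>" using lm20 by (simp add: le_floor_iff)
  hence "20 \<le> m" unfolding m_def by linarith
  hence m20: "20 \<le> real m" by simp
  have evM': "\<And>t::nat. 1 \<le> t \<Longrightarrow> real t \<le> lm \<Longrightarrow>
      \<bar>emp_gap X \<theta> i t - d\<bar> \<le> sqrt ((lm * d\<^sup>2 / 5 - \<kappa> / 2 + 1 / (4 * \<alpha>) * ln (lm / real t)) / real t)"
    using evM by (simp add: event_M_def lm_def d_def)
  have "\<bar>emp_gap X \<theta> i m - d\<bar> \<le> sqrt ((lm * d\<^sup>2 / 5 - \<kappa> / 2 + 1 / (4 * \<alpha>) * ln (lm / real m)) / real m)"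
    using m1 m20 by (intro evM') auto
  hence "0 \<le> (lm * d\<^sup>2 / 5 - \<kappa> / 2 + 1 / (4 * \<alpha>) * ln (lm / real m)) / real m"
    by (metis abs_ge_zero order_trans real_sqrt_ge_0_iff)
  hence Em: "0 \<le> lm * d\<^sup>2 / 5 - \<kappa> / 2 + 1 / (4 * \<alpha>) * ln (lm / real m)"
    using m20 by (simp add: zero_le_divide_iff)
  have "ln (lm / real m) \<le> lm / real m - 1" using m20 lm20 by (intro ln_le_minus_one) simp
  also have "\<dots> \<le> 1/20"
  proof -
    have "lm \<le> real m * (21/20)" using m1 m20 by linarith
    thus ?thesis using m20 by (simp add: field_simps)
  qed
  finally have "1 / (4 * \<alpha>) * ln (lm / real m) \<le> 1 / (4 * \<alpha>) * (1/20)"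
    using alpha by (intro mult_left_mono) auto
  hence hk: "\<kappa> / 2 \<le> lm * d\<^sup>2 / 5 + 1 / (80 * \<alpha>)" using Em by simp
  have hD: "\<bar>emp_gap X \<theta> i n - d\<bar> \<le> sqrt ((lm * d\<^sup>2 / 5 - \<kappa> / 2 + 1 / (4 * \<alpha>) * ln (lm / real n)) / real n)"
    using n1 nl lm20 by (intro evM') auto
  have D0: "0 \<le> emp_gap X \<theta> i n" by (simp add: emp_gap_def)
  have "\<alpha> * real n * (emp_gap X \<theta> i n)\<^sup>2 + 0.5 * ln (real n) \<le> \<Lambda> - (\<alpha> * \<kappa> + ln \<alpha> + 0.5 - \<alpha>)"
    using alpha(1) d0 LB lm_eq _ nl hk D0 hD by (rule core) (use n1 in simp)
  moreover have "lsa_index \<alpha> X \<theta> I i T' > \<Lambda> - f \<kappa>" using xi iK by auto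
  ultimately show False by (simp add: lsa_index_def n_def f_def)
qed

end
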